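(* Let $D\subset\mathbb{R}^n$ be a domain. For $z\in D$ let $\tau_D(Z)$ be the first exit time from $D$ of iterated Brownian motion $Z$ started at $z$, and $\tau_D(Z^1)$ the first exit time from $D$ of Brownian-time Brownian motion $Z^1$ started at $z$. Then for all $z\in D$ and all $t>0$, $$P_z[\tau_D(Z)>t]\le 2\,P_z[\tau_D(Z^1)>t].$$
   Context: Iterated Brownian motion started at $z$: with $X^+,X^-$ independent $n$-dimensional Brownian motions started at $0$ and $Y$ an independent one-dimensional Brownian motion started at $0$, set $X_t=X^+_t$ for $t\ge0$, $X_t=X^-_{-t}$ for $t<0$, and $Z_t=z+X(Y_t)$. Brownian-time Brownian motion started at $z$: with $X$ an $n$-dimensional Brownian motion started at $0$ and $Y$ an independent one-dimensional Brownian motion started at $0$, $Z^1_t=z+X(|Y_t|)$. For a process $W$, $\tau_D(W)=\inf\{t\ge0: W_t\notin D\}$. *)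

theory Defs
  imports "HOL-Probability.Probability"
begin

text \<open>Processes are maps W :: omega => real => value; only times t >= 0 matter.
  The path space on the time set [0,oo) with the product sigma-algebra.\<close>

definition path_space :: "(real \<Rightarrow> 'b::topological_space) measure" where
  "path_space = Pi\<^sub>M {0..} (\<lambda>_. borel)"

definition path_of :: "('w \<Rightarrow> real \<Rightarrow> 'b) \<Rightarrow> 'w \<Rightarrow> real \<Rightarrow> 'b" where
  "path_of W \<omega> = restrict (W \<omega>) {0..}"

definition std_BM :: "'w measure \<Rightarrow> ('w \<Rightarrow> real \<Rightarrow> real) \<Rightarrow> bool" where
  "std_BM M B \<longleftrightarrow> prob_space M \<and>
     (\<forall>t\<ge>0. (\<lambda>\<omega>. B \<omega> t) \<in> borel_measurable M) \<and>
     (\<forall>\<omega>\<in>space M. B \<omega> 0 = 0 \<and> continuous_on {0..} (B \<omega>)) \<and>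
     (\<forall>ts :: real list. sorted_wrt (<) ts \<and> ts \<noteq> [] \<and> 0 \<le> hd ts \<longrightarrow>
        prob_space.indep_vars M (\<lambda>_. borel) (\<lambda>i \<omega>. B \<omega> (ts ! Suc i) - B \<omega> (ts ! i))
          {..<length ts - 1} \<and>
        (\<forall>i < length ts - 1. distributed M lborel (\<lambda>\<omega>. B \<omega> (ts ! Suc i) - B \<omega> (ts ! i))
            (\<lambda>x. ennreal (normal_density 0 (sqrt (ts ! Suc i - ts ! i)) x))))"

definition BM :: "'w measure \<Rightarrow> ('w \<Rightarrow> real \<Rightarrow> 'a::euclidean_space) \<Rightarrow> bool" where
  "BM M X \<longleftrightarrow> prob_space M \<and>
     (\<forall>b\<in>Basis. std_BM M (\<lambda>\<omega> t. X \<omega> t \<bullet> b)) \<and>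
     prob_space.indep_vars M (\<lambda>_. path_space) (\<lambda>b. path_of (\<lambda>\<omega> t. X \<omega> t \<bullet> b)) Basis"

text \<open>Independence of two random variables with possibly different value spaces
  (the library's indep_var requires a common value type).\<close>

definition indep_rvs :: "'w measure \<Rightarrow> 'b measure \<Rightarrow> ('w \<Rightarrow> 'b) \<Rightarrow> 'c measure \<Rightarrow> ('w \<Rightarrow> 'c) \<Rightarrow> bool" where
  "indep_rvs M Ma A Mb B \<longleftrightarrow> A \<in> measurable M Ma \<and> B \<in> measurable M Mb \<and>
     prob_space.indep_set M {A -` S \<inter> space M | S. S \<in> sets Ma} {B -` S \<inter> space M | S. S \<in> sets Mb}"

text \<open>First exit time from D: inf {t >= 0. W t \<notin> D}, with inf of the empty set = oo.\<close>

definition exit_time :: "'a set \<Rightarrow> (real \<Rightarrow> 'a) \<Rightarrow> ereal" where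
  "exit_time D W = Inf ((\<lambda>t. ereal t) ` {t. 0 \<le> t \<and> W t \<notin> D})"

definition iterated_BM :: "'a::real_vector \<Rightarrow> ('w \<Rightarrow> real \<Rightarrow> 'a) \<Rightarrow> ('w \<Rightarrow> real \<Rightarrow> 'a)
    \<Rightarrow> ('w \<Rightarrow> real \<Rightarrow> real) \<Rightarrow> 'w \<Rightarrow> real \<Rightarrow> 'a" where
  "iterated_BM z Xp Xm Y \<omega> t =
     z + (if 0 \<le> Y \<omega> t then Xp \<omega> (Y \<omega> t) else Xm \<omega> (- Y \<omega> t))"

definition brownian_time_BM :: "'a::real_vector \<Rightarrow> ('w \<Rightarrow> real \<Rightarrow> 'a)
    \<Rightarrow> ('w \<Rightarrow> real \<Rightarrow> real) \<Rightarrow> 'w \<Rightarrow> real \<Rightarrow> 'a" where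
  "brownian_time_BM z X Y \<omega> t = z + X \<omega> \<bar>Y \<omega> t\<bar>"

end

theory Submission
  imports Defs
begin


lemma rat_dense_closed:
  fixes f :: "real \<Rightarrow> 'b::metric_space"
  assumes ab: "a < b" and cf: "continuous_on {a..b} f" and C: "closed C"
    and Q: "\<And>q. q \<in> \<rat> \<Longrightarrow> a \<le> q \<Longrightarrow> q < b \<Longrightarrow> f q \<in> C" and s: "s \<in> {a..b}"
  shows "f s \<in> C"
proof (rule ccontr)
  assume ns: "f s \<notin> C"
  have "open (- C)" using C by auto
  then obtain e where e: "e > 0" "ball (f s) e \<subseteq> - C"
    using ns by (meson ComplI open_contains_ball)
  obtain d where d: "d > 0" "\<forall>x'\<in>{a..b}. dist x' s < d \<longrightarrow> dist (f x') (f s) < e"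
    using cf s e(1) unfolding continuous_on_iff by blast
  have "max a (s - d) < min b (s + d)" using ab s d(1) by auto
  then obtain q where q: "q \<in> \<rat>" "max a (s - d) < q" "q < min b (s + d)"
    using Rats_dense_in_real by blast
  have "dist (f q) (f s) < e" using d(2) q by (auto simp: dist_real_def)
  hence "f q \<in> - C" using e(2) by (auto simp: dist_commute)
  moreover have "f q \<in> C" using Q q by auto
  ultimately show False by auto
qed

lemma stay_from_real:
  fixes x :: "real \<Rightarrow> 'a::euclidean_space" and y :: "real \<Rightarrow> real" and t :: real
  assumes t: "0 \<le> t" and cy: "continuous_on {0..t} y" and y0: "y 0 = 0"
    and cx: "continuous_on {0..} x" and D: "open D" "D \<noteq> UNIV"
    and H: "\<forall>s\<in>{0..t}. 0 \<le> y s \<longrightarrow> z + x (y s) \<in> D"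
  shows "\<exists>c>0. \<forall>s\<in>{0..t}. \<forall>u. 0 \<le> u \<longrightarrow> u \<le> y s \<longrightarrow> c \<le> infdist (z + x u) (- D)"
proof -
  have "\<exists>s0\<in>{0..t}. \<forall>s\<in>{0..t}. y s \<le> y s0"
    by (rule continuous_attains_sup) (use cy t in \<open>auto simp: compact_Icc\<close>)
  then obtain s0 where s0: "s0 \<in> {0..t}" "\<forall>s\<in>{0..t}. y s \<le> y s0" by blast
  define Mx where "Mx = y s0"
  have Mx0: "0 \<le> Mx" using s0(2)[rule_format, of 0] t y0 unfolding Mx_def by simp
  define h where "h u = infdist (z + x u) (- D)" for u
  have ch: "continuous_on {0..Mx} h"
    unfolding h_def
    by (intro continuous_on_infdist continuous_on_add continuous_on_const continuous_on_subset[OF cx]) auto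
  have pos: "h u > 0" if u: "u \<in> {0..Mx}" for u
  proof -
    have cy': "continuous_on {0..s0} y" using continuous_on_subset[OF cy] s0 by auto
    obtain s where s: "0 \<le> s" "s \<le> s0" "y s = u"
      using IVT'[of y 0 u s0] u y0 s0 cy' unfolding Mx_def by auto
    hence "z + x u \<in> D" using H s0 u by auto
    thus ?thesis unfolding h_def using D
      by (intro infdist_pos_not_in_closed) auto
  qed
  obtain u0 where u0: "u0 \<in> {0..Mx}" "\<forall>u\<in>{0..Mx}. h u0 \<le> h u"
    using continuous_attains_inf[of "{0..Mx}" h] ch Mx0 by auto
  show ?thesis
  proof (intro exI[of _ "h u0"] conjI ballI allI impI)
    show "0 < h u0" using pos u0 by auto
    fix s u assume "s \<in> {0..t}" "0 \<le> u" "u \<le> y s"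
    hence "u \<in> {0..Mx}" using s0 unfolding Mx_def by force
    thus "h u0 \<le> infdist (z + x u) (- D)" using u0 unfolding h_def by auto
  qed
qed

lemma real_from_stay:
  fixes x :: "real \<Rightarrow> 'a::euclidean_space" and y :: "real \<Rightarrow> real" and t :: real
  assumes t: "0 < t" and cy: "continuous_on {0..t} y"
    and cx: "continuous_on {0..} x" and x0: "x 0 = 0" and z: "z \<in> D" and c: "c > 0"
    and st: "\<forall>r\<in>\<rat>. \<forall>q\<in>\<rat>. 0 \<le> r \<longrightarrow> 0 \<le> q \<longrightarrow> q \<le> t \<longrightarrow> r < y q \<longrightarrow> c \<le> infdist (z + x r) (- D)"
    and s: "s \<in> {0..t}" and u: "0 \<le> u" "u \<le> y s"
  shows "z + x u \<in> D"
proof (cases "u = 0")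
  case True then show ?thesis using z x0 by simp
next
  case False
  hence u0: "0 < u" using u by auto
  have "(\<lambda>v. infdist (z + x v) (- D)) u \<in> {c..}"
  proof (rule rat_dense_closed[of 0 u "\<lambda>v. infdist (z + x v) (- D)" "{c..}" u])
    show "continuous_on {0..u} (\<lambda>v. infdist (z + x v) (- D))"
      by (intro continuous_on_infdist continuous_on_add continuous_on_const continuous_on_subset[OF cx]) auto
    show "u \<in> {0..u}" using u0 by auto
    fix r assume r: "r \<in> \<rat>" "0 \<le> r" "r < u"
    have "\<exists>q\<in>\<rat>. 0 \<le> q \<and> q < t \<and> r < y q"
    proof (rule ccontr)
      assume "\<not> ?thesis"
      hence "y s \<in> {..r}"
        using rat_dense_closed[of 0 t y "{..r}" s] t cy s by (force simp: not_less)
      thus False using r u by auto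
    qed
    then obtain q where "q \<in> \<rat>" "0 \<le> q" "q < t" "r < y q" by auto
    thus "infdist (z + x r) (- D) \<in> {c..}" using st r by auto
  qed (use u0 in auto)
  hence "infdist (z + x u) (- D) > 0" using c by auto
  thus ?thesis by (metis ComplI infdist_zero less_irrefl)
qed

lemma exit_gt_imp:
  fixes t :: real
  assumes "exit_time D w > ereal t" "s \<in> {0..t}"
  shows "w s \<in> D"
proof (rule ccontr)
  assume "w s \<notin> D"
  hence "exit_time D w \<le> ereal s" unfolding exit_time_def
    using assms(2) by (intro Inf_lower) auto
  moreover have "ereal s \<le> ereal t" using assms(2) by simp
  ultimately show False using assms(1) by (meson leD order_trans)
qed

lemma imp_exit_gt:
  fixes w :: "real \<Rightarrow> 'a::metric_space"
  assumes cw: "continuous_on {0..} w" and D: "open D" and t: "0 \<le> t"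
    and H: "\<forall>s\<in>{0..t}. w s \<in> D"
  shows "exit_time D w > ereal t"
proof -
  define F where "F = {s. 0 \<le> s \<and> w s \<notin> D}"
  show ?thesis
  proof (cases "F = {}")
    case True
    thus ?thesis unfolding exit_time_def F_def[symmetric] by (simp add: top_ereal_def)
  next
    case False
    have "closed F"
    proof -
      have "F = {0..} \<inter> w -` (- D)" unfolding F_def by auto
      moreover have "closed ({0..} \<inter> w -` (- D))"
        using continuous_closed_preimage[OF cw, of "- D"] D by (auto simp: vimage_def Int_def)
      ultimately show ?thesis by simp
    qed
    have bdd: "bdd_below F" unfolding F_def by (auto intro: bdd_belowI[of _ 0])
    have IF: "Inf F \<in> F" using closed_contains_Inf[OF False bdd \<open>closed F\<close>] .
    hence gt: "Inf F > t" using H unfolding F_def by force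
    have "ereal (Inf F) \<le> exit_time D w"
      unfolding exit_time_def F_def[symmetric]
      by (rule Inf_greatest) (auto intro: cInf_lower[OF _ bdd])
    moreover have "ereal t < ereal (Inf F)" using gt by simp
    ultimately show ?thesis by (meson less_le_trans)
  qed
qed



lemma component_meas:
  "(\<lambda>x. x i) \<in> borel_measurable (PiM I (\<lambda>_. (borel :: 'b::topological_space measure)))"
proof (cases "i \<in> I")
  case True then show ?thesis by (rule measurable_component_singleton)
next
  case False
  have "(\<lambda>x. x i) \<in> borel_measurable (PiM I (\<lambda>_. (borel :: 'b measure))) \<longleftrightarrow>
        (\<lambda>x. undefined :: 'b) \<in> borel_measurable (PiM I (\<lambda>_. (borel :: 'b measure)))"
    by (rule measurable_cong) (use False in \<open>auto simp: space_PiM PiE_def extensional_def\<close>)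
  then show ?thesis by simp
qed

lemma path_of_meas:
  assumes "\<And>t. t \<ge> 0 \<Longrightarrow> (\<lambda>\<omega>. B \<omega> t) \<in> borel_measurable M"
  shows "path_of B \<in> measurable M path_space"
  unfolding path_of_def path_space_def
  by (rule measurable_restrict) (use assms in auto)

definition tsJ :: "real set \<Rightarrow> real list" where
  "tsJ J = sorted_list_of_set (insert 0 (insert 1 J))"
definition incr_law :: "real set \<Rightarrow> (nat \<Rightarrow> real) measure" where
  "incr_law J = PiM {..<length (tsJ J) - 1}
     (\<lambda>i. density lborel (\<lambda>x. ennreal (normal_density 0 (sqrt (tsJ J ! Suc i - tsJ J ! i)) x)))"
definition idx :: "real set \<Rightarrow> real \<Rightarrow> nat" where
  "idx J j = (LEAST k. tsJ J ! k = j)"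
definition Phi :: "real set \<Rightarrow> (nat \<Rightarrow> real) \<Rightarrow> real \<Rightarrow> real" where
  "Phi J d = (\<lambda>j\<in>J. \<Sum>i<idx J j. d i)"
definition fdd_law :: "real set \<Rightarrow> (real \<Rightarrow> real) measure" where
  "fdd_law J = distr (incr_law J) (PiM J (\<lambda>_. borel)) (Phi J)"

lemma tsJ_props:
  assumes "finite J" "J \<subseteq> {0..}"
  shows "sorted_wrt (<) (tsJ J)" "set (tsJ J) = insert 0 (insert 1 J)"
    "2 \<le> length (tsJ J)" "tsJ J ! 0 = 0"
proof -
  let ?S = "insert (0::real) (insert 1 J)"
  have fS: "finite ?S" using assms by simp
  show st: "sorted_wrt (<) (tsJ J)" unfolding tsJ_def by (rule strict_sorted_list_of_set)
  show set: "set (tsJ J) = ?S" unfolding tsJ_def by (rule set_sorted_list_of_set[OF fS])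
  have "card ?S \<ge> 2"
  proof -
    have "{0::real, 1} \<subseteq> ?S" by auto
    hence "card {0::real,1} \<le> card ?S" using fS by (rule card_mono[rotated])
    thus ?thesis by simp
  qed
  moreover have "length (tsJ J) = card ?S" unfolding tsJ_def by (metis length_sorted_list_of_set)
  ultimately show len: "2 \<le> length (tsJ J)" by simp
  have "0 \<in> set (tsJ J)" using set by simp
  then obtain k where k: "k < length (tsJ J)" "tsJ J ! k = 0" by (auto simp: in_set_conv_nth)
  have "tsJ J ! 0 \<le> tsJ J ! k"
    using st k(1) by (cases "k = 0") (auto simp: sorted_wrt_iff_nth_less intro: less_imp_le)
  moreover have "tsJ J ! 0 \<in> set (tsJ J)" using len by (intro nth_mem) linarith
  hence "tsJ J ! 0 \<ge> 0" using set assms by auto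
  ultimately show "tsJ J ! 0 = 0" using k by simp
qed

lemma idx_props:
  assumes "finite J" "J \<subseteq> {0..}" "j \<in> J"
  shows "idx J j < length (tsJ J)" "tsJ J ! idx J j = j"
proof -
  have "j \<in> set (tsJ J)" using tsJ_props(2)[OF assms(1,2)] assms(3) by simp
  then obtain k where k: "k < length (tsJ J)" "tsJ J ! k = j" by (auto simp: in_set_conv_nth)
  show "tsJ J ! idx J j = j" unfolding idx_def by (rule LeastI[of _ k]) (use k in auto)
  have "idx J j \<le> k" unfolding idx_def by (rule Least_le) (use k in auto)
  thus "idx J j < length (tsJ J)" using k by simp
qed

lemma std_BM_fdd:
  assumes B: "std_BM M B" and J: "finite J" "J \<subseteq> {0..}"
  shows "distr M (PiM J (\<lambda>_. borel)) (\<lambda>\<omega>. \<lambda>j\<in>J. B \<omega> j) = fdd_law J"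
proof -
  interpret prob_space M using B unfolding std_BM_def by auto
  define ts where "ts = tsJ J"
  define n where "n = length ts"
  define I where "I = {..<n - 1}"
  note tp = tsJ_props[OF J, folded ts_def]
  have tsnn: "ts ! i \<ge> 0" if "i < n" for i
  proof -
    have "ts ! i \<in> set ts" using that unfolding n_def by simp
    thus ?thesis using tp(2) J by auto
  qed
  define Dl where "Dl i \<omega> = B \<omega> (ts ! Suc i) - B \<omega> (ts ! i)" for i \<omega>
  have Bm: "\<And>t. t \<ge> 0 \<Longrightarrow> (\<lambda>\<omega>. B \<omega> t) \<in> borel_measurable M" using B unfolding std_BM_def by auto
  have Dlm: "Dl i \<in> borel_measurable M" if "i \<in> I" for i
    unfolding Dl_def using that tsnn by (auto simp: I_def intro!: borel_measurable_diff Bm)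
  have hyp: "sorted_wrt (<) ts \<and> ts \<noteq> [] \<and> 0 \<le> hd ts" using tp
    by (metis hd_conv_nth list.size(3) not_numeral_le_zero order_refl)
  have ind: "indep_vars (\<lambda>_. borel) Dl I"
    and dis: "\<And>i. i \<in> I \<Longrightarrow> distributed M lborel (Dl i) (\<lambda>x. ennreal (normal_density 0 (sqrt (ts ! Suc i - ts ! i)) x))"
    using B hyp unfolding std_BM_def Dl_def I_def n_def by blast+
  have "0 \<in> I" using tp(3) unfolding I_def n_def by auto
  hence Ine: "I \<noteq> {}" by auto
  have law: "distr M (PiM I (\<lambda>_. borel)) (\<lambda>\<omega>. \<lambda>i\<in>I. Dl i \<omega>) = incr_law J"
  proof -
    have "distr M (PiM I (\<lambda>_. borel)) (\<lambda>\<omega>. \<lambda>i\<in>I. Dl i \<omega>) = PiM I (\<lambda>i. distr M borel (Dl i))"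
      using indep_vars_iff_distr_eq_PiM'[OF Ine, where M'="\<lambda>_. borel" and X=Dl] Dlm ind by simp
    also have "\<dots> = incr_law J"
      unfolding incr_law_def ts_def[symmetric] n_def[symmetric] I_def[symmetric]
    proof (rule PiM_cong[OF refl])
      fix i assume i: "i \<in> I"
      have "distr M borel (Dl i) = distr M lborel (Dl i)" by (rule distr_cong) auto
      also have "\<dots> = density lborel (\<lambda>x. ennreal (normal_density 0 (sqrt (ts ! Suc i - ts ! i)) x))"
        using distributed_distr_eq_density[OF dis[OF i]] .
      finally show "distr M borel (Dl i) = density lborel (\<lambda>x. ennreal (normal_density 0 (sqrt (ts ! Suc i - ts ! i)) x))" .
    qed
    finally show ?thesis .
  qed
  have Phim: "Phi J \<in> measurable (PiM I (\<lambda>_. borel)) (PiM J (\<lambda>_. borel))"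
    unfolding Phi_def by (intro measurable_restrict borel_measurable_sum component_meas)
  have Dvm: "(\<lambda>\<omega>. \<lambda>i\<in>I. Dl i \<omega>) \<in> measurable M (PiM I (\<lambda>_. borel))"
    by (intro measurable_restrict Dlm)
  have pw: "(\<lambda>j\<in>J. B \<omega> j) = Phi J (\<lambda>i\<in>I. Dl i \<omega>)" if \<omega>: "\<omega> \<in> space M" for \<omega>
  proof
    fix j show "(\<lambda>j\<in>J. B \<omega> j) j = Phi J (\<lambda>i\<in>I. Dl i \<omega>) j"
    proof (cases "j \<in> J")
      case True
      note ip = idx_props[OF J True, folded ts_def]
      have "(\<Sum>i<idx J j. (\<lambda>i\<in>I. Dl i \<omega>) i) = (\<Sum>i<idx J j. B \<omega> (ts ! Suc i) - B \<omega> (ts ! i))"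
        using ip(1) unfolding I_def n_def Dl_def by (intro sum.cong) auto
      also have "\<dots> = B \<omega> (ts ! idx J j) - B \<omega> (ts ! 0)"
        by (rule sum_lessThan_telescope[where f = "\<lambda>k. B \<omega> (ts ! k)"])
      also have "\<dots> = B \<omega> j" using ip tp(4) B \<omega> unfolding std_BM_def by auto
      finally show ?thesis using True unfolding Phi_def by simp
    qed (simp add: Phi_def)
  qed
  have "distr M (PiM J (\<lambda>_. borel)) (\<lambda>\<omega>. \<lambda>j\<in>J. B \<omega> j) =
        distr M (PiM J (\<lambda>_. borel)) (Phi J \<circ> (\<lambda>\<omega>. \<lambda>i\<in>I. Dl i \<omega>))"
    by (rule distr_cong) (use pw in auto)
  also have "\<dots> = distr (distr M (PiM I (\<lambda>_. borel)) (\<lambda>\<omega>. \<lambda>i\<in>I. Dl i \<omega>)) (PiM J (\<lambda>_. borel)) (Phi J)"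
    by (rule distr_distr[symmetric, OF Phim Dvm])
  also have "\<dots> = fdd_law J" unfolding law fdd_law_def ..
  finally show ?thesis .
qed

lemma std_BM_meas:
  assumes "std_BM M B" shows "path_of B \<in> measurable M path_space"
  using assms unfolding std_BM_def by (intro path_of_meas) auto

lemma std_BM_law:
  assumes B: "std_BM M B" and B': "std_BM N B'"
  shows "distr M path_space (path_of B) = distr N path_space (path_of B')"
proof -
  have key: "distr (distr K path_space (path_of C)) (PiM J (\<lambda>_. borel)) (\<lambda>\<omega>. restrict \<omega> J) = fdd_law J"
    if C: "std_BM K C" and J: "finite J" "J \<subseteq> {0..}" for K :: "'x measure" and C J
  proof -
    have Jm: "(\<lambda>\<omega>. restrict \<omega> J) \<in> measurable (path_space :: (real \<Rightarrow> real) measure) (PiM J (\<lambda>_. borel))"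
      unfolding path_space_def using J by (intro measurable_restrict_subset) auto
    have "distr (distr K path_space (path_of C)) (PiM J (\<lambda>_. borel)) (\<lambda>\<omega>. restrict \<omega> J) =
        distr K (PiM J (\<lambda>_. borel)) ((\<lambda>\<omega>. restrict \<omega> J) \<circ> path_of C)"
      by (rule distr_distr[OF Jm std_BM_meas[OF C]])
    also have "\<dots> = distr K (PiM J (\<lambda>_. borel)) (\<lambda>\<omega>. \<lambda>j\<in>J. C \<omega> j)"
      by (rule distr_cong) (use J in \<open>auto simp: path_of_def restrict_def fun_eq_iff\<close>)
    also have "\<dots> = fdd_law J" by (rule std_BM_fdd[OF C J])
    finally show ?thesis .
  qed
  show ?thesis unfolding path_space_def
  proof (rule measure_eqI_PiM_infinite)
    show "sets (distr M (PiM {0..} (\<lambda>_. borel)) (path_of B)) = sets (PiM {0..} (\<lambda>_. borel))" by simp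
    show "sets (distr N (PiM {0..} (\<lambda>_. borel)) (path_of B')) = sets (PiM {0..} (\<lambda>_. borel))" by simp
    show "finite_measure (distr M (PiM {0..} (\<lambda>_. borel)) (path_of B))"
      using B std_BM_meas[OF B] unfolding std_BM_def path_space_def
      by (metis prob_space.prob_space_distr prob_space_def)
    fix A :: "real \<Rightarrow> real set" and J :: "real set" assume J: "finite J" "J \<subseteq> {0..}" and A: "\<And>i. i \<in> J \<Longrightarrow> A i \<in> sets (borel :: real measure)"
    have AS: "PiE J A \<in> sets (PiM J (\<lambda>_. borel :: real measure))" using A by (intro sets_PiM_I_finite J) auto
    have e: "emeasure (distr K (PiM {0..} (\<lambda>_. borel)) (path_of C)) (prod_emb {0..} (\<lambda>_. borel) J (PiE J A))
        = emeasure (fdd_law J) (PiE J A)" if C: "std_BM K C" for K :: "'x measure" and C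
    proof -
      have "emeasure (distr K (PiM {0..} (\<lambda>_. borel)) (path_of C)) (prod_emb {0..} (\<lambda>_. borel) J (PiE J A))
        = emeasure (distr (distr K (PiM {0..} (\<lambda>_. borel)) (path_of C)) (PiM J (\<lambda>_. borel)) (\<lambda>\<omega>. restrict \<omega> J)) (PiE J A)"
        by (rule emeasure_distr_restrict[symmetric]) (use J AS in auto)
      also have "\<dots> = emeasure (fdd_law J) (PiE J A)" using key[OF C J] unfolding path_space_def by simp
      finally show ?thesis .
    qed
    show "emeasure (distr M (PiM {0..} (\<lambda>_. borel)) (path_of B)) (prod_emb {0..} (\<lambda>_. borel) J (PiE J A)) =
          emeasure (distr N (PiM {0..} (\<lambda>_. borel)) (path_of B')) (prod_emb {0..} (\<lambda>_. borel) J (PiE J A))"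
      using e[OF B] e[OF B'] by simp
  qed
qed

definition coords :: "('w \<Rightarrow> real \<Rightarrow> 'a::euclidean_space) \<Rightarrow> 'w \<Rightarrow> 'a \<Rightarrow> real \<Rightarrow> real" where
  "coords Z = (\<lambda>\<omega>. \<lambda>b\<in>Basis. path_of (\<lambda>\<omega> t. Z \<omega> t \<bullet> b) \<omega>)"
definition Psi :: "('a::euclidean_space \<Rightarrow> real \<Rightarrow> real) \<Rightarrow> real \<Rightarrow> 'a" where
  "Psi F = (\<lambda>t\<in>{0..}. \<Sum>b\<in>Basis. F b t *\<^sub>R b)"

lemma Psi_meas: "Psi \<in> measurable (PiM Basis (\<lambda>_. path_space)) (path_space :: (real \<Rightarrow> 'a::euclidean_space) measure)"
  unfolding Psi_def path_space_def
proof (intro measurable_restrict borel_measurable_sum borel_measurable_scaleR borel_measurable_const)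
  fix t and b :: 'a assume b: "b \<in> Basis"
  show "(\<lambda>F. F b t) \<in> borel_measurable (PiM Basis (\<lambda>_. PiM {0..} (\<lambda>_. borel)))"
    using measurable_compose[OF measurable_component_singleton[OF b] component_meas[of t "{0..}"]]
    by simp
qed

lemma BM_coords_law:
  assumes Z: "BM K Z"
  shows "distr K (PiM Basis (\<lambda>_. path_space)) (coords Z) = PiM Basis (\<lambda>b. distr K path_space (path_of (\<lambda>\<omega> t. Z \<omega> t \<bullet> b)))"
proof -
  interpret prob_space K using Z unfolding BM_def by auto
  have "indep_vars (\<lambda>_. path_space) (\<lambda>b. path_of (\<lambda>\<omega> t. Z \<omega> t \<bullet> b)) Basis"
    using Z unfolding BM_def by auto
  moreover have "\<And>b. b \<in> Basis \<Longrightarrow> random_variable path_space (path_of (\<lambda>\<omega> t. Z \<omega> t \<bullet> b))"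
    using Z unfolding BM_def by (auto intro: std_BM_meas)
  ultimately show ?thesis unfolding coords_def
    using indep_vars_iff_distr_eq_PiM'[where I=Basis and M'="\<lambda>_. path_space" and X="\<lambda>b. path_of (\<lambda>\<omega> t. Z \<omega> t \<bullet> b)"]
    by simp
qed

lemma path_of_Psi: "path_of Z \<omega> = Psi (coords Z \<omega>)"
  unfolding path_of_def Psi_def coords_def
  by (auto simp: fun_eq_iff restrict_def euclidean_representation)

lemma BM_meas:
  assumes Z: "BM K Z" shows "path_of Z \<in> measurable K path_space"
proof -
  have "coords Z \<in> measurable K (PiM Basis (\<lambda>_. path_space))"
    unfolding coords_def using Z unfolding BM_def by (intro measurable_restrict) (auto intro: std_BM_meas)
  hence "Psi \<circ> coords Z \<in> measurable K path_space" by (rule measurable_comp) (rule Psi_meas)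
  moreover have "Psi \<circ> coords Z = path_of Z" by (rule ext) (simp add: path_of_Psi)
  ultimately show ?thesis by simp
qed

lemma BM_law:
  assumes Z: "BM M Z" and Z': "BM N Z'"
  shows "distr M path_space (path_of Z) = distr N path_space (path_of Z')"
proof -
  have e: "distr K path_space (path_of W) = distr (distr K (PiM Basis (\<lambda>_. path_space)) (coords W)) path_space Psi"
    if W: "BM K W" for K :: "'x measure" and W
  proof -
    have cm: "coords W \<in> measurable K (PiM Basis (\<lambda>_. path_space))"
      unfolding coords_def using W unfolding BM_def by (intro measurable_restrict) (auto intro: std_BM_meas)
    have "distr K path_space (path_of W) = distr K path_space (Psi \<circ> coords W)"
      by (rule distr_cong) (auto simp: path_of_Psi)
    also have "\<dots> = distr (distr K (PiM Basis (\<lambda>_. path_space)) (coords W)) path_space Psi"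
      by (rule distr_distr[symmetric, OF Psi_meas cm])
    finally show ?thesis .
  qed
  have "PiM Basis (\<lambda>b. distr M path_space (path_of (\<lambda>\<omega> t. Z \<omega> t \<bullet> b)))
      = PiM Basis (\<lambda>b. distr N path_space (path_of (\<lambda>\<omega> t. Z' \<omega> t \<bullet> b)))"
    by (rule PiM_cong[OF refl], rule std_BM_law) (use Z Z' in \<open>auto simp: BM_def\<close>)
  thus ?thesis unfolding e[OF Z] e[OF Z'] BM_coords_law[OF Z] BM_coords_law[OF Z'] by simp
qed

lemma indep_rvs_distr:
  assumes P: "prob_space M" and I: "indep_rvs M Ma A Mb B"
  shows "distr M (Ma \<Otimes>\<^sub>M Mb) (\<lambda>\<omega>. (A \<omega>, B \<omega>)) = distr M Ma A \<Otimes>\<^sub>M distr M Mb B"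
proof -
  interpret prob_space M by fact
  have Am: "A \<in> measurable M Ma" and Bm: "B \<in> measurable M Mb"
    and ind: "indep_set {A -` S \<inter> space M | S. S \<in> sets Ma} {B -` S \<inter> space M | S. S \<in> sets Mb}"
    using I unfolding indep_rvs_def by auto
  have XY: "(\<lambda>\<omega>. (A \<omega>, B \<omega>)) \<in> measurable M (Ma \<Otimes>\<^sub>M Mb)" using Am Bm by (rule measurable_Pair)
  interpret X: prob_space "distr M Ma A" by (rule prob_space_distr) fact
  interpret Y: prob_space "distr M Mb B" by (rule prob_space_distr) fact
  show ?thesis
  proof (rule pair_measure_eqI[symmetric])
    show "sigma_finite_measure (distr M Ma A)" ..
    show "sigma_finite_measure (distr M Mb B)" ..
    fix S T assume S: "S \<in> sets (distr M Ma A)" and T: "T \<in> sets (distr M Mb B)"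
    have "emeasure (distr M (Ma \<Otimes>\<^sub>M Mb) (\<lambda>\<omega>. (A \<omega>, B \<omega>))) (S \<times> T) = emeasure M ((\<lambda>x. (A x, B x)) -` (S \<times> T) \<inter> space M)"
      using S T by (intro emeasure_distr[OF XY]) auto
    also have "(\<lambda>x. (A x, B x)) -` (S \<times> T) \<inter> space M = (A -` S \<inter> space M) \<inter> (B -` T \<inter> space M)" by auto
    also have "emeasure M \<dots> = emeasure M (A -` S \<inter> space M) * emeasure M (B -` T \<inter> space M)"
    proof -
      have "prob ((A -` S \<inter> space M) \<inter> (B -` T \<inter> space M)) = prob (A -` S \<inter> space M) * prob (B -` T \<inter> space M)"
      proof -
        have a: "A -` S \<inter> space M \<in> {A -` S \<inter> space M | S. S \<in> sets Ma}" using S by auto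
        have b: "B -` T \<inter> space M \<in> {B -` S \<inter> space M | S. S \<in> sets Mb}" using T by auto
        show ?thesis using conjunct2[OF conjunct2[OF ind[unfolded indep_sets2_eq]], rule_format, OF a b] .
      qed
      thus ?thesis by (simp add: emeasure_eq_measure measure_nonneg ennreal_mult)
    qed
    also have "\<dots> = emeasure (distr M Ma A) S * emeasure (distr M Mb B) T"
      using Am Bm S T by (simp add: emeasure_distr)
    finally show "emeasure (distr M Ma A) S * emeasure (distr M Mb B) T = emeasure (distr M (Ma \<Otimes>\<^sub>M Mb) (\<lambda>\<omega>. (A \<omega>, B \<omega>))) (S \<times> T)" ..
  qed simp
qed

lemma indep_rvs_fst:
  assumes P: "prob_space M" and I: "indep_rvs M (Ma \<Otimes>\<^sub>M Mb) (\<lambda>\<omega>. (A \<omega>, B \<omega>)) Mc C"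
  shows "indep_rvs M Ma A Mc C"
proof -
  interpret prob_space M by fact
  have XY: "(\<lambda>\<omega>. (A \<omega>, B \<omega>)) \<in> measurable M (Ma \<Otimes>\<^sub>M Mb)" and Cm: "C \<in> measurable M Mc"
    and ind: "indep_set {(\<lambda>\<omega>. (A \<omega>, B \<omega>)) -` S \<inter> space M | S. S \<in> sets (Ma \<Otimes>\<^sub>M Mb)} {C -` S \<inter> space M | S. S \<in> sets Mc}"
    using I unfolding indep_rvs_def by auto
  have Am: "A \<in> measurable M Ma" using measurable_compose[OF XY measurable_fst] by simp
  have Bm: "B \<in> measurable M Mb" using measurable_compose[OF XY measurable_snd] by simp
  have sub: "{A -` S \<inter> space M | S. S \<in> sets Ma} \<subseteq> {(\<lambda>\<omega>. (A \<omega>, B \<omega>)) -` S \<inter> space M | S. S \<in> sets (Ma \<Otimes>\<^sub>M Mb)}"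
  proof safe
    fix S assume S: "S \<in> sets Ma"
    have "A -` S \<inter> space M = (\<lambda>\<omega>. (A \<omega>, B \<omega>)) -` (S \<times> space Mb) \<inter> space M"
      using measurable_space[OF Bm] by auto
    thus "\<exists>S'. A -` S \<inter> space M = (\<lambda>\<omega>. (A \<omega>, B \<omega>)) -` S' \<inter> space M \<and> S' \<in> sets (Ma \<Otimes>\<^sub>M Mb)"
      using S by blast
  qed
  have "indep_set {A -` S \<inter> space M | S. S \<in> sets Ma} {C -` S \<inter> space M | S. S \<in> sets Mc}"
    unfolding indep_sets2_eq
  proof (intro conjI ballI)
    have i2: "{(\<lambda>\<omega>. (A \<omega>, B \<omega>)) -` S \<inter> space M | S. S \<in> sets (Ma \<Otimes>\<^sub>M Mb)} \<subseteq> events"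
      "{C -` S \<inter> space M | S. S \<in> sets Mc} \<subseteq> events"
      "\<forall>a\<in>{(\<lambda>\<omega>. (A \<omega>, B \<omega>)) -` S \<inter> space M | S. S \<in> sets (Ma \<Otimes>\<^sub>M Mb)}. \<forall>b\<in>{C -` S \<inter> space M | S. S \<in> sets Mc}. prob (a \<inter> b) = prob a * prob b"
      using ind unfolding indep_sets2_eq by auto
    show "{A -` S \<inter> space M | S. S \<in> sets Ma} \<subseteq> events" using i2(1) sub by (rule order_trans[rotated])
    show "{C -` S \<inter> space M | S. S \<in> sets Mc} \<subseteq> events" by (rule i2(2))
    fix a b assume "a \<in> {A -` S \<inter> space M | S. S \<in> sets Ma}" "b \<in> {C -` S \<inter> space M | S. S \<in> sets Mc}"
    thus "prob (a \<inter> b) = prob a * prob b" using i2(3) sub by (meson subsetD)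
  qed
  thus ?thesis unfolding indep_rvs_def using Am Cm by auto
qed

lemma indep_rvs_snd:
  assumes P: "prob_space M" and I: "indep_rvs M (Ma \<Otimes>\<^sub>M Mb) (\<lambda>\<omega>. (A \<omega>, B \<omega>)) Mc C"
  shows "indep_rvs M Mb B Mc C"
proof -
  interpret prob_space M by fact
  have XY: "(\<lambda>\<omega>. (A \<omega>, B \<omega>)) \<in> measurable M (Ma \<Otimes>\<^sub>M Mb)" and Cm: "C \<in> measurable M Mc"
    and ind: "indep_set {(\<lambda>\<omega>. (A \<omega>, B \<omega>)) -` S \<inter> space M | S. S \<in> sets (Ma \<Otimes>\<^sub>M Mb)} {C -` S \<inter> space M | S. S \<in> sets Mc}"
    using I unfolding indep_rvs_def by auto
  have Am: "A \<in> measurable M Ma" using measurable_compose[OF XY measurable_fst] by simp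
  have Bm: "B \<in> measurable M Mb" using measurable_compose[OF XY measurable_snd] by simp
  have sub: "{B -` S \<inter> space M | S. S \<in> sets Mb} \<subseteq> {(\<lambda>\<omega>. (A \<omega>, B \<omega>)) -` S \<inter> space M | S. S \<in> sets (Ma \<Otimes>\<^sub>M Mb)}"
  proof safe
    fix S assume S: "S \<in> sets Mb"
    have "B -` S \<inter> space M = (\<lambda>\<omega>. (A \<omega>, B \<omega>)) -` (space Ma \<times> S) \<inter> space M"
      using measurable_space[OF Am] by auto
    thus "\<exists>S'. B -` S \<inter> space M = (\<lambda>\<omega>. (A \<omega>, B \<omega>)) -` S' \<inter> space M \<and> S' \<in> sets (Ma \<Otimes>\<^sub>M Mb)"
      using S by blast
  qed
  have "indep_set {B -` S \<inter> space M | S. S \<in> sets Mb} {C -` S \<inter> space M | S. S \<in> sets Mc}"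
    unfolding indep_sets2_eq
  proof (intro conjI ballI)
    have i2: "{(\<lambda>\<omega>. (A \<omega>, B \<omega>)) -` S \<inter> space M | S. S \<in> sets (Ma \<Otimes>\<^sub>M Mb)} \<subseteq> events"
      "{C -` S \<inter> space M | S. S \<in> sets Mc} \<subseteq> events"
      "\<forall>a\<in>{(\<lambda>\<omega>. (A \<omega>, B \<omega>)) -` S \<inter> space M | S. S \<in> sets (Ma \<Otimes>\<^sub>M Mb)}. \<forall>b\<in>{C -` S \<inter> space M | S. S \<in> sets Mc}. prob (a \<inter> b) = prob a * prob b"
      using ind unfolding indep_sets2_eq by auto
    show "{B -` S \<inter> space M | S. S \<in> sets Mb} \<subseteq> events" using i2(1) sub by (rule order_trans[rotated])
    show "{C -` S \<inter> space M | S. S \<in> sets Mc} \<subseteq> events" by (rule i2(2))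
    fix a b assume "a \<in> {B -` S \<inter> space M | S. S \<in> sets Mb}" "b \<in> {C -` S \<inter> space M | S. S \<in> sets Mc}"
    thus "prob (a \<inter> b) = prob a * prob b" using i2(3) sub by (meson subsetD)
  qed
  thus ?thesis unfolding indep_rvs_def using Bm Cm by auto
qed



definition stayP :: "'a::euclidean_space set \<Rightarrow> 'a \<Rightarrow> real \<Rightarrow> (real \<Rightarrow> 'a) \<Rightarrow> (real \<Rightarrow> real) \<Rightarrow> real \<Rightarrow> bool" where
  "stayP D z t x y c \<longleftrightarrow> (\<forall>r::rat. \<forall>q::rat. 0 \<le> real_of_rat r \<longrightarrow> 0 \<le> real_of_rat q \<longrightarrow> real_of_rat q \<le> t \<longrightarrow> real_of_rat r < y (real_of_rat q) \<longrightarrow> c \<le> infdist (z + x (real_of_rat r)) (- D))"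
definition Eset :: "real \<Rightarrow> (real \<Rightarrow> real) \<Rightarrow> bool" where
  "Eset t y \<longleftrightarrow> (\<forall>q::rat. 0 \<le> real_of_rat q \<longrightarrow> real_of_rat q \<le> t \<longrightarrow> (\<exists>q'::rat. 0 \<le> real_of_rat q' \<and> real_of_rat q' \<le> t \<and> - y (real_of_rat q) \<le> y (real_of_rat q')))"
definition Splus :: "'a::euclidean_space set \<Rightarrow> 'a \<Rightarrow> real \<Rightarrow> ((real \<Rightarrow> 'a) \<times> (real \<Rightarrow> real)) set" where
  "Splus D z t = {p \<in> space (path_space \<Otimes>\<^sub>M path_space). Eset t (snd p) \<and> (\<exists>k::nat. stayP D z t (fst p) (snd p) (1 / Suc k))}"
definition Sminus :: "'a::euclidean_space set \<Rightarrow> 'a \<Rightarrow> real \<Rightarrow> ((real \<Rightarrow> 'a) \<times> (real \<Rightarrow> real)) set" where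
  "Sminus D z t = {p \<in> space (path_space \<Otimes>\<^sub>M path_space). \<not> Eset t (snd p) \<and> (\<exists>k::nat. stayP D z t (fst p) (\<lambda>s. - snd p s) (1 / Suc k))}"

lemma snd_comp_meas:
  "(\<lambda>p. snd p q) \<in> borel_measurable ((path_space :: (real \<Rightarrow> 'a::euclidean_space) measure) \<Otimes>\<^sub>M (path_space :: (real \<Rightarrow> real) measure))"
  unfolding path_space_def by (rule measurable_compose[OF measurable_snd component_meas])

lemma fst_comp_meas:
  "(\<lambda>p. infdist (z + fst p r) (- D)) \<in> borel_measurable ((path_space :: (real \<Rightarrow> 'a::euclidean_space) measure) \<Otimes>\<^sub>M (path_space :: (real \<Rightarrow> real) measure))"
proof -
  have "(\<lambda>p. fst p r) \<in> borel_measurable ((path_space :: (real \<Rightarrow> 'a::euclidean_space) measure) \<Otimes>\<^sub>M (path_space :: (real \<Rightarrow> real) measure))"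
    unfolding path_space_def by (rule measurable_compose[OF measurable_fst component_meas])
  moreover have "continuous_on UNIV (\<lambda>v. infdist (z + v) (- D))" by (intro continuous_intros)
  ultimately show ?thesis using measurable_compose[OF _ borel_measurable_continuous_onI] by blast
qed

lemma Splus_sets: "Splus D z t \<in> sets (path_space \<Otimes>\<^sub>M path_space)"
proof -
  note [measurable] = snd_comp_meas fst_comp_meas
  show ?thesis unfolding Splus_def Eset_def stayP_def
    by measurable
qed

lemma Sminus_sets: "Sminus D z t \<in> sets (path_space \<Otimes>\<^sub>M path_space)"
proof -
  note [measurable] = snd_comp_meas fst_comp_meas
  show ?thesis unfolding Sminus_def Eset_def stayP_def
    by measurable
qed

lemma stayP_iff:
  "stayP D z t x y c \<longleftrightarrow> (\<forall>r\<in>\<rat>. \<forall>q\<in>\<rat>. 0 \<le> r \<longrightarrow> 0 \<le> q \<longrightarrow> q \<le> t \<longrightarrow> r < y q \<longrightarrow> c \<le> infdist (z + x r) (- D))"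
  unfolding stayP_def Rats_def by auto

lemma Eset_iff:
  "Eset t y \<longleftrightarrow> (\<forall>q\<in>\<rat>. 0 \<le> q \<longrightarrow> q \<le> t \<longrightarrow> (\<exists>q'\<in>\<rat>. 0 \<le> q' \<and> q' \<le> t \<and> - y q \<le> y q'))"
  unfolding Eset_def Rats_def by auto

lemma stayP_cong:
  assumes "\<And>s. 0 \<le> s \<Longrightarrow> x s = x' s" "\<And>s. 0 \<le> s \<Longrightarrow> y s = y' s"
  shows "stayP D z t x y c = stayP D z t x' y' c"
  unfolding stayP_def using assms by (simp del: zero_le_of_rat_iff)

lemma Eset_cong:
  assumes "\<And>s. 0 \<le> s \<Longrightarrow> y s = y' s"
  shows "Eset t y = Eset t y'"
  unfolding Eset_def using assms by (simp del: zero_le_of_rat_iff cong: conj_cong)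

lemma get_stay:
  fixes x :: "real \<Rightarrow> 'a::euclidean_space" and y :: "real \<Rightarrow> real" and t :: real
  assumes t: "0 < t" and cy: "continuous_on {0..} y" and y0: "y 0 = 0"
    and cx: "continuous_on {0..} x" and D: "open D" "D \<noteq> UNIV"
    and H: "\<forall>s\<in>{0..t}. 0 \<le> y s \<longrightarrow> z + x (y s) \<in> D"
  shows "\<exists>k::nat. stayP D z t x y (1 / Suc k)"
proof -
  obtain c where c: "c > 0" "\<forall>s\<in>{0..t}. \<forall>u. 0 \<le> u \<longrightarrow> u \<le> y s \<longrightarrow> c \<le> infdist (z + x u) (- D)"
    using stay_from_real[of t y x D z] t continuous_on_subset[OF cy, of "{0..t}"] y0 cx D H by auto
  obtain n :: nat where n: "n > 0" "inverse (of_nat n) < c" using ex_inverse_of_nat_less[OF c(1)] by auto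
  have "stayP D z t x y (1 / Suc (n - 1))"
    unfolding stayP_iff
  proof (intro ballI impI)
    fix r q :: real assume "r \<in> \<rat>" "q \<in> \<rat>" "0 \<le> r" "0 \<le> q" "q \<le> t" "r < y q"
    hence "c \<le> infdist (z + x r) (- D)" using c(2) by auto
    moreover have "1 / real (Suc (n - 1)) \<le> c" using n by (simp add: field_simps)
    ultimately show "1 / real (Suc (n - 1)) \<le> infdist (z + x r) (- D)" by linarith
  qed
  thus ?thesis by blast
qed

lemma space_pair_restrict:
  "(restrict x {0..}, restrict y {0..}) \<in> space ((path_space :: (real \<Rightarrow> 'a::euclidean_space) measure) \<Otimes>\<^sub>M (path_space :: (real \<Rightarrow> real) measure))"
  unfolding path_space_def by (simp add: space_pair_measure space_PiM)

lemma M_side: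
  fixes x1 x2 :: "real \<Rightarrow> 'a::euclidean_space" and y :: "real \<Rightarrow> real" and t :: real
  assumes t: "0 < t" and cx1: "continuous_on {0..} x1" and cx2: "continuous_on {0..} x2"
    and cy: "continuous_on {0..} y" and x20: "x2 0 = 0" and y0: "y 0 = 0"
    and z: "z \<in> D" and D: "open D" "D \<noteq> UNIV"
    and ex: "exit_time D (\<lambda>s. z + (if 0 \<le> y s then x1 (y s) else x2 (- y s))) > ereal t"
  shows "(restrict x1 {0..}, restrict y {0..}) \<in> Splus D z t \<or> (restrict x2 {0..}, restrict y {0..}) \<in> Sminus D z t"
proof -
  have st: "z + (if 0 \<le> y s then x1 (y s) else x2 (- y s)) \<in> D" if "s \<in> {0..t}" for s
    using exit_gt_imp[OF ex that] by simp
  obtain k1 where k1: "stayP D z t x1 y (1 / Suc k1)"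
  proof -
    have "\<forall>s\<in>{0..t}. 0 \<le> y s \<longrightarrow> z + x1 (y s) \<in> D"
    proof (intro ballI impI)
      fix s assume "s \<in> {0..t}" "0 \<le> y s"
      thus "z + x1 (y s) \<in> D" using st[of s] by simp
    qed
    thus ?thesis using get_stay[OF t cy y0 cx1 D] that by blast
  qed
  have H2: "\<forall>s\<in>{0..t}. 0 \<le> - y s \<longrightarrow> z + x2 (- y s) \<in> D"
  proof (intro ballI impI)
    fix s assume s: "s \<in> {0..t}" "0 \<le> - y s"
    show "z + x2 (- y s) \<in> D"
    proof (cases "y s = 0")
      case True thus ?thesis using x20 z by simp
    next
      case False thus ?thesis using st[OF s(1)] s(2) by simp
    qed
  qed
  obtain k2 where k2: "stayP D z t x2 (\<lambda>s. - y s) (1 / Suc k2)"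
    using get_stay[OF t _ _ cx2 D H2] cy y0 by (auto intro: continuous_on_minus)
  have k1': "stayP D z t (restrict x1 {0..}) (restrict y {0..}) (1 / Suc k1)"
    using k1 by (subst stayP_cong) auto
  have k2': "stayP D z t (restrict x2 {0..}) (\<lambda>s. - restrict y {0..} s) (1 / Suc k2)"
    using k2 by (subst stayP_cong) auto
  show ?thesis
  proof (cases "Eset t (restrict y {0..})")
    case True
    thus ?thesis using k1' space_pair_restrict unfolding Splus_def by auto
  next
    case False
    thus ?thesis using k2' space_pair_restrict unfolding Sminus_def by auto
  qed
qed

lemma N_side:
  fixes x :: "real \<Rightarrow> 'a::euclidean_space" and y :: "real \<Rightarrow> real" and t :: real
  assumes t: "0 < t" and cx: "continuous_on {0..} x" and cy: "continuous_on {0..} y"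
    and x0: "x 0 = 0" and z: "z \<in> D" and D: "open D"
    and mem: "(restrict x {0..}, restrict y {0..}) \<in> Splus D z t \<union> Sminus D z t"
  shows "exit_time D (\<lambda>s. z + x \<bar>y s\<bar>) > ereal t"
proof -
  have cyt: "continuous_on {0..t} y" using continuous_on_subset[OF cy] by auto
  have "\<exists>s0\<in>{0..t}. \<forall>s\<in>{0..t}. y s \<le> y s0"
    by (rule continuous_attains_sup) (use cyt t in \<open>auto simp: compact_Icc\<close>)
  then obtain s0 where s0: "s0 \<in> {0..t}" "\<forall>s\<in>{0..t}. y s \<le> y s0" by blast
  have "\<exists>s1\<in>{0..t}. \<forall>s\<in>{0..t}. - y s \<le> - y s1"
    by (rule continuous_attains_sup) (use cyt t in \<open>auto simp: compact_Icc intro: continuous_on_minus\<close>)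
  then obtain s1 where s1: "s1 \<in> {0..t}" "\<forall>s\<in>{0..t}. - y s \<le> - y s1" by blast
  have cmy: "continuous_on {0..t} (\<lambda>s. - y s)" using cyt by (rule continuous_on_minus)
  have stays: "\<forall>s\<in>{0..t}. z + x \<bar>y s\<bar> \<in> D"
  proof (cases "(restrict x {0..}, restrict y {0..}) \<in> Splus D z t")
    case True
    then obtain k where E: "Eset t (restrict y {0..})" and k: "stayP D z t (restrict x {0..}) (restrict y {0..}) (1 / Suc k)"
      unfolding Splus_def by auto
    have E': "Eset t y" using E by (subst Eset_cong[where y' = "restrict y {0..}"]) auto
    have k': "stayP D z t x y (1 / Suc k)" using k by (subst stayP_cong[where x' = "restrict x {0..}" and y' = "restrict y {0..}"]) auto
    have "(\<lambda>s. - y s) s1 \<in> {..y s0}"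
    proof (rule rat_dense_closed[of 0 t "\<lambda>s. - y s" "{..y s0}" s1])
      fix q assume q: "q \<in> \<rat>" "0 \<le> q" "q < t"
      have "\<exists>q'\<in>\<rat>. 0 \<le> q' \<and> q' \<le> t \<and> - y q \<le> y q'" using E' q unfolding Eset_iff by simp
      then obtain q' where "q' \<in> \<rat>" "0 \<le> q'" "q' \<le> t" "- y q \<le> y q'" by blast
      moreover have "y q' \<le> y s0" using s0(2) \<open>0 \<le> q'\<close> \<open>q' \<le> t\<close> by simp
      ultimately show "- y q \<in> {..y s0}" by simp
    qed (use t cmy s1 in auto)
    hence m: "- y s1 \<le> y s0" by simp
    have b: "\<bar>y s\<bar> \<le> y s0" if "s \<in> {0..t}" for s
      using s0(2)[rule_format, OF that] s1(2)[rule_format, OF that] m unfolding abs_le_iff by linarith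
    show ?thesis
    proof
      fix s assume s: "s \<in> {0..t}"
      show "z + x \<bar>y s\<bar> \<in> D"
        by (rule real_from_stay[OF t cyt cx x0 z _ _ s0(1)]) (use k' b[OF s] in \<open>auto simp: stayP_iff\<close>)
    qed
  next
    case False
    then obtain k where E: "\<not> Eset t (restrict y {0..})" and k: "stayP D z t (restrict x {0..}) (\<lambda>s. - restrict y {0..} s) (1 / Suc k)"
      using mem unfolding Sminus_def by auto
    have E': "\<not> Eset t y" using E by (subst (asm) Eset_cong[where y' = "y"]) auto
    have k': "stayP D z t x (\<lambda>s. - y s) (1 / Suc k)" using k by (subst (asm) stayP_cong[where x' = "x" and y' = "\<lambda>s. - y s"]) auto
    have "\<exists>q\<in>\<rat>. 0 \<le> q \<and> q \<le> t \<and> (\<forall>q'\<in>\<rat>. 0 \<le> q' \<longrightarrow> q' \<le> t \<longrightarrow> y q' < - y q)"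
      using E' unfolding Eset_iff by (meson not_le)
    then obtain q where q: "q \<in> \<rat>" "0 \<le> q" "q \<le> t" "\<forall>q'\<in>\<rat>. 0 \<le> q' \<longrightarrow> q' \<le> t \<longrightarrow> y q' < - y q"
      by blast
    have "y s0 \<in> {..- y q}"
    proof (rule rat_dense_closed[of 0 t y "{..- y q}" s0])
      fix q' assume "q' \<in> \<rat>" "0 \<le> q'" "q' < t"
      thus "y q' \<in> {..- y q}" using q(4) by (simp add: less_imp_le)
    qed (use t cyt s0 in auto)
    hence m: "y s0 \<le> - y q" by simp
    have m2: "- y q \<le> - y s1" using s1(2) q(2,3) by simp
    have b: "\<bar>y s\<bar> \<le> - y s1" if "s \<in> {0..t}" for s
      using s0(2)[rule_format, OF that] s1(2)[rule_format, OF that] m m2 unfolding abs_le_iff by linarith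
    show ?thesis
    proof
      fix s assume s: "s \<in> {0..t}"
      have "z + x \<bar>y s\<bar> \<in> D"
        by (rule real_from_stay[OF t cmy cx x0 z _ _ s1(1)]) (use k' b[OF s] in \<open>auto simp: stayP_iff\<close>)
      thus "z + x \<bar>y s\<bar> \<in> D" .
    qed
  qed
  have cw: "continuous_on {0..} (\<lambda>s. z + x \<bar>y s\<bar>)"
  proof (intro continuous_on_add continuous_on_const)
    have "continuous_on {0..} (\<lambda>s. \<bar>y s\<bar>)" using cy by (rule continuous_on_rabs)
    thus "continuous_on {0..} (\<lambda>s. x \<bar>y s\<bar>)"
      by (rule continuous_on_compose2[OF cx]) auto
  qed
  show ?thesis using imp_exit_gt[OF cw D _ stays] t by simp
qed



lemma BM_path:
  assumes Z: "BM K Z" and w: "\<omega> \<in> space K"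
  shows "continuous_on {0..} (Z \<omega>)" "Z \<omega> 0 = 0"
proof -
  have co: "\<forall>b\<in>Basis. continuous_on {0..} (\<lambda>t. Z \<omega> t \<bullet> b) \<and> Z \<omega> 0 \<bullet> b = 0"
    using Z w unfolding BM_def std_BM_def by auto
  have "Z \<omega> = (\<lambda>t. \<Sum>b\<in>Basis. (Z \<omega> t \<bullet> b) *\<^sub>R b)" by (simp add: euclidean_representation)
  moreover have "continuous_on {0..} (\<lambda>t. \<Sum>b\<in>Basis. (Z \<omega> t \<bullet> b) *\<^sub>R b)"
    using co by (intro continuous_on_sum continuous_on_scaleR continuous_on_const) auto
  ultimately show "continuous_on {0..} (Z \<omega>)" by metis
  show "Z \<omega> 0 = 0" using co euclidean_all_zero_iff[of "Z \<omega> 0"] by blast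
qed

lemma std_BM_path:
  assumes "std_BM K Y" "\<omega> \<in> space K"
  shows "continuous_on {0..} (Y \<omega>)" "Y \<omega> 0 = 0"
  using assms unfolding std_BM_def by auto

theorem theorem1p3:
  fixes D :: "'a::euclidean_space set"
    and M :: "'w measure" and Xp Xm :: "'w \<Rightarrow> real \<Rightarrow> 'a" and Y :: "'w \<Rightarrow> real \<Rightarrow> real"
    and N :: "'v measure" and X :: "'v \<Rightarrow> real \<Rightarrow> 'a" and Y1 :: "'v \<Rightarrow> real \<Rightarrow> real"
    and z :: 'a and t :: real
  assumes D: "open D" "connected D" "D \<noteq> {}"
    and z: "z \<in> D" and t: "t > 0"
    and Xp: "BM M Xp" and Xm: "BM M Xm" and Y: "std_BM M Y"
    and indep1: "prob_space.indep_var M path_space (path_of Xp) path_space (path_of Xm)"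
    and indep2: "indep_rvs M (path_space \<Otimes>\<^sub>M path_space)
                   (\<lambda>\<omega>. (path_of Xp \<omega>, path_of Xm \<omega>)) path_space (path_of Y)"
    and X: "BM N X" and Y1: "std_BM N Y1"
    and indep3: "indep_rvs N path_space (path_of X) path_space (path_of Y1)"
  shows "measure M {\<omega> \<in> space M. exit_time D (iterated_BM z Xp Xm Y \<omega>) > ereal t}
         \<le> 2 * measure N {\<omega> \<in> space N. exit_time D (brownian_time_BM z X Y1 \<omega>) > ereal t}"
proof -
  have PM: "prob_space M" and PN: "prob_space N" using Y Y1 unfolding std_BM_def by auto
  interpret M: prob_space M by fact
  interpret N: prob_space N by fact
  define A where "A = {\<omega> \<in> space M. exit_time D (iterated_BM z Xp Xm Y \<omega>) > ereal t}"
  define B where "B = {\<omega> \<in> space N. exit_time D (brownian_time_BM z X Y1 \<omega>) > ereal t}"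
  show ?thesis
  proof (cases "D = UNIV")
    case True
    have "exit_time D w = \<infinity>" for w :: "real \<Rightarrow> 'a"
      unfolding exit_time_def True by (simp add: top_ereal_def)
    hence "A = space M" "B = space N" unfolding A_def B_def by auto
    thus ?thesis unfolding A_def[symmetric] B_def[symmetric] by (simp add: M.prob_space N.prob_space)
  next
    case DU: False
    define p1 where "p1 = (\<lambda>\<omega>. (path_of Xp \<omega>, path_of Y \<omega>))"
    define p2 where "p2 = (\<lambda>\<omega>. (path_of Xm \<omega>, path_of Y \<omega>))"
    define pN where "pN = (\<lambda>\<omega>. (path_of X \<omega>, path_of Y1 \<omega>))"
    have p1m: "p1 \<in> measurable M (path_space \<Otimes>\<^sub>M path_space)"
      unfolding p1_def by (intro measurable_Pair BM_meas[OF Xp] std_BM_meas[OF Y])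
    have p2m: "p2 \<in> measurable M (path_space \<Otimes>\<^sub>M path_space)"
      unfolding p2_def by (intro measurable_Pair BM_meas[OF Xm] std_BM_meas[OF Y])
    have pNm: "pN \<in> measurable N (path_space \<Otimes>\<^sub>M path_space)"
      unfolding pN_def by (intro measurable_Pair BM_meas[OF X] std_BM_meas[OF Y1])
    have lawN: "distr N (path_space \<Otimes>\<^sub>M path_space) pN = distr N path_space (path_of X) \<Otimes>\<^sub>M distr N path_space (path_of Y1)"
      unfolding pN_def by (rule indep_rvs_distr[OF PN indep3])
    have law1: "distr M (path_space \<Otimes>\<^sub>M path_space) p1 = distr N (path_space \<Otimes>\<^sub>M path_space) pN"
      unfolding lawN p1_def
      by (simp add: indep_rvs_distr[OF PM indep_rvs_fst[OF PM indep2]] BM_law[OF Xp X] std_BM_law[OF Y Y1])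
    have law2: "distr M (path_space \<Otimes>\<^sub>M path_space) p2 = distr N (path_space \<Otimes>\<^sub>M path_space) pN"
      unfolding lawN p2_def
      by (simp add: indep_rvs_distr[OF PM indep_rvs_snd[OF PM indep2]] BM_law[OF Xm X] std_BM_law[OF Y Y1])
    define P1 where "P1 = p1 -` Splus D z t \<inter> space M"
    define P2 where "P2 = p2 -` Sminus D z t \<inter> space M"
    define Q1 where "Q1 = pN -` Splus D z t \<inter> space N"
    define Q2 where "Q2 = pN -` Sminus D z t \<inter> space N"
    have P1s: "P1 \<in> sets M" unfolding P1_def using p1m Splus_sets by (rule measurable_sets)
    have P2s: "P2 \<in> sets M" unfolding P2_def using p2m Sminus_sets by (rule measurable_sets)
    have Q1s: "Q1 \<in> sets N" unfolding Q1_def using pNm Splus_sets by (rule measurable_sets)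
    have Q2s: "Q2 \<in> sets N" unfolding Q2_def using pNm Sminus_sets by (rule measurable_sets)
    have mP1: "measure M P1 = measure N Q1"
      unfolding P1_def Q1_def
      using measure_distr[OF p1m Splus_sets] measure_distr[OF pNm Splus_sets] law1 by metis
    have mP2: "measure M P2 = measure N Q2"
      unfolding P2_def Q2_def
      using measure_distr[OF p2m Sminus_sets] measure_distr[OF pNm Sminus_sets] law2 by metis
    have AP: "A \<subseteq> P1 \<union> P2"
    proof
      fix \<omega> assume w: "\<omega> \<in> A"
      hence ws: "\<omega> \<in> space M" and ex: "exit_time D (iterated_BM z Xp Xm Y \<omega>) > ereal t" unfolding A_def by auto
      have "iterated_BM z Xp Xm Y \<omega> = (\<lambda>s. z + (if 0 \<le> Y \<omega> s then Xp \<omega> (Y \<omega> s) else Xm \<omega> (- Y \<omega> s)))"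
        by (rule ext) (simp add: iterated_BM_def)
      hence "(restrict (Xp \<omega>) {0..}, restrict (Y \<omega>) {0..}) \<in> Splus D z t \<or> (restrict (Xm \<omega>) {0..}, restrict (Y \<omega>) {0..}) \<in> Sminus D z t"
        using M_side[OF t BM_path(1)[OF Xp ws] BM_path(1)[OF Xm ws] std_BM_path(1)[OF Y ws]
            BM_path(2)[OF Xm ws] std_BM_path(2)[OF Y ws] z D(1) DU] ex by simp
      thus "\<omega> \<in> P1 \<union> P2" unfolding P1_def P2_def p1_def p2_def path_of_def using ws by auto
    qed
    have BQ: "B = Q1 \<union> Q2"
    proof (intro equalityI subsetI)
      fix \<omega> assume w: "\<omega> \<in> B"
      hence ws: "\<omega> \<in> space N" and ex: "exit_time D (brownian_time_BM z X Y1 \<omega>) > ereal t" unfolding B_def by auto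
      have "brownian_time_BM z X Y1 \<omega> = (\<lambda>s. z + (if 0 \<le> Y1 \<omega> s then X \<omega> (Y1 \<omega> s) else X \<omega> (- Y1 \<omega> s)))"
        by (rule ext) (simp add: brownian_time_BM_def)
      hence "(restrict (X \<omega>) {0..}, restrict (Y1 \<omega>) {0..}) \<in> Splus D z t \<or> (restrict (X \<omega>) {0..}, restrict (Y1 \<omega>) {0..}) \<in> Sminus D z t"
        using M_side[OF t BM_path(1)[OF X ws] BM_path(1)[OF X ws] std_BM_path(1)[OF Y1 ws]
            BM_path(2)[OF X ws] std_BM_path(2)[OF Y1 ws] z D(1) DU] ex by simp
      thus "\<omega> \<in> Q1 \<union> Q2" unfolding Q1_def Q2_def pN_def path_of_def using ws by auto
    next
      fix \<omega> assume w: "\<omega> \<in> Q1 \<union> Q2"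
      hence ws: "\<omega> \<in> space N" and mem: "(restrict (X \<omega>) {0..}, restrict (Y1 \<omega>) {0..}) \<in> Splus D z t \<union> Sminus D z t"
        unfolding Q1_def Q2_def pN_def path_of_def by auto
      have "brownian_time_BM z X Y1 \<omega> = (\<lambda>s. z + X \<omega> \<bar>Y1 \<omega> s\<bar>)"
        by (rule ext) (simp add: brownian_time_BM_def)
      hence "exit_time D (brownian_time_BM z X Y1 \<omega>) > ereal t"
        using N_side[OF t BM_path(1)[OF X ws] std_BM_path(1)[OF Y1 ws] BM_path(2)[OF X ws] z D(1) mem] by simp
      thus "\<omega> \<in> B" unfolding B_def using ws by auto
    qed
    have Bs: "B \<in> sets N" unfolding BQ using Q1s Q2s by auto
    have "measure M A \<le> measure M (P1 \<union> P2)"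
    proof (cases "A \<in> sets M")
      case True thus ?thesis using AP P1s P2s by (intro M.finite_measure_mono) auto
    next
      case False thus ?thesis by (simp add: measure_notin_sets)
    qed
    also have "\<dots> \<le> measure M P1 + measure M P2" by (rule measure_Un_le[OF P1s P2s])
    also have "\<dots> = measure N Q1 + measure N Q2" using mP1 mP2 by simp
    also have "\<dots> \<le> measure N B + measure N B"
      using N.finite_measure_mono[OF _ Bs, of Q1] N.finite_measure_mono[OF _ Bs, of Q2] BQ by auto
    finally show ?thesis unfolding A_def B_def by simp
  qed
qed


end
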